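(* Let $x$ be a point in a model $M$. The following are equivalent: (1) $x$ is separated; (2) there exists a $(\wedge,\to)$-formula $\varphi$ such that $x$ is a $\varphi$-border point, i.e. $x\not\models\varphi$ while every $y>x$ satisfies $\varphi$.
   Context: Fix $n\ge 1$ and propositional variables $p_1,\dots,p_n$; $2^n=\{0,1\}^n$ with componentwise order. A model is $(M,\le,c)$ with $(M,\le)$ a poset and $c:M\to 2^n$ order-preserving, with the usual intuitionistic Kripke semantics ($x\models p_i$ iff $c(x)_i=1$; $x\models\varphi\to\psi$ iff for all $y\ge x$, $y\models\varphi$ implies $y\models\psi$; etc.). Write $v(\varphi)=\{x: x\models\varphi\}$. A $(\wedge,\to)$-formula is a formula built from $p_1,\dots,p_n$ using only $\wedge$ and $\to$. For an up-set $A$, a border point of $A$ is a maximal element of $M\setminus A$; $x$ is a $\varphi$-border point if it is a border point of $v(\varphi)$. A point is separated if it is a $q$-border point for some propositional variable $q$. *)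

theory Defs
  imports Main
begin

text \<open>Propositional variables p_1,...,p_n are represented as Var 0, ..., Var (n-1).\<close>
datatype form = Var nat | Bot | Conj form form | Disj form form | Imp form form

fun vars :: "form \<Rightarrow> nat set" where
  "vars (Var i) = {i}"
| "vars Bot = {}"
| "vars (Conj a b) = vars a \<union> vars b"
| "vars (Disj a b) = vars a \<union> vars b"
| "vars (Imp a b) = vars a \<union> vars b"

fun conj_imp :: "form \<Rightarrow> bool" where
  "conj_imp (Var i) = True"
| "conj_imp Bot = False"
| "conj_imp (Conj a b) = (conj_imp a \<and> conj_imp b)"
| "conj_imp (Disj a b) = False"
| "conj_imp (Imp a b) = (conj_imp a \<and> conj_imp b)"

definition is_model :: "nat \<Rightarrow> 'a set \<Rightarrow> ('a \<Rightarrow> 'a \<Rightarrow> bool) \<Rightarrow> ('a \<Rightarrow> nat \<Rightarrow> bool) \<Rightarrow> bool" where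
  "is_model n M le c \<longleftrightarrow>
     (\<forall>x\<in>M. le x x) \<and>
     (\<forall>x\<in>M. \<forall>y\<in>M. le x y \<and> le y x \<longrightarrow> x = y) \<and>
     (\<forall>x\<in>M. \<forall>y\<in>M. \<forall>z\<in>M. le x y \<and> le y z \<longrightarrow> le x z) \<and>
     (\<forall>x\<in>M. \<forall>y\<in>M. \<forall>i<n. le x y \<and> c x i \<longrightarrow> c y i)"

fun sat :: "'a set \<Rightarrow> ('a \<Rightarrow> 'a \<Rightarrow> bool) \<Rightarrow> ('a \<Rightarrow> nat \<Rightarrow> bool) \<Rightarrow> 'a \<Rightarrow> form \<Rightarrow> bool" where
  "sat M le c x (Var i) = c x i"
| "sat M le c x Bot = False"
| "sat M le c x (Conj a b) = (sat M le c x a \<and> sat M le c x b)"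
| "sat M le c x (Disj a b) = (sat M le c x a \<or> sat M le c x b)"
| "sat M le c x (Imp a b) = (\<forall>y\<in>M. le x y \<longrightarrow> sat M le c y a \<longrightarrow> sat M le c y b)"

definition val :: "'a set \<Rightarrow> ('a \<Rightarrow> 'a \<Rightarrow> bool) \<Rightarrow> ('a \<Rightarrow> nat \<Rightarrow> bool) \<Rightarrow> form \<Rightarrow> 'a set" where
  "val M le c \<phi> = {x\<in>M. sat M le c x \<phi>}"

definition border_point :: "'a set \<Rightarrow> ('a \<Rightarrow> 'a \<Rightarrow> bool) \<Rightarrow> 'a set \<Rightarrow> 'a \<Rightarrow> bool" where
  "border_point M le A x \<longleftrightarrow>
     x \<in> M - A \<and> (\<forall>y\<in>M - A. le x y \<longrightarrow> y = x)"

definition form_border_point :: "'a set \<Rightarrow> ('a \<Rightarrow> 'a \<Rightarrow> bool) \<Rightarrow> ('a \<Rightarrow> nat \<Rightarrow> bool) \<Rightarrow> form \<Rightarrow> 'a \<Rightarrow> bool" where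
  "form_border_point M le c \<phi> x \<longleftrightarrow> border_point M le (val M le c \<phi>) x"

definition separated :: "nat \<Rightarrow> 'a set \<Rightarrow> ('a \<Rightarrow> 'a \<Rightarrow> bool) \<Rightarrow> ('a \<Rightarrow> nat \<Rightarrow> bool) \<Rightarrow> 'a \<Rightarrow> bool" where
  "separated n M le c x \<longleftrightarrow> (\<exists>i<n. form_border_point M le c (Var i) x)"

end

theory Submission
  imports Defs
begin
lemma t1: assumes m: "is_model n M le c" shows "\<forall>x\<in>M. \<forall>y\<in>M. \<forall>i<n. le x y \<and> c x i \<longrightarrow> c y i"
  using m unfolding is_model_def by blast
lemma t2: assumes m: "is_model n M le c" shows "\<forall>x\<in>M. \<forall>y\<in>M. \<forall>z\<in>M. le x y \<and> le y z \<longrightarrow> le x z"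
  using m unfolding is_model_def by blast
lemma persist:
  assumes m: "is_model n M le c"
  shows "vars \<phi> \<subseteq> {..<n} \<Longrightarrow> x \<in> M \<Longrightarrow> y \<in> M \<Longrightarrow> le x y \<Longrightarrow> sat M le c x \<phi> \<Longrightarrow> sat M le c y \<phi>"
proof (induction \<phi> arbitrary: x y)
  case (Var i)
  have "i < n" using Var.prems(1) by simp
  moreover have "c x i" using Var.prems(5) by simp
  ultimately have "c y i" using t1[OF m] Var.prems(2,3,4) by blast
  then show ?case by simp
next
  case Bot
  then show ?case by simp
next
  case (Conj a b)
  have va: "vars a \<subseteq> {..<n}" and vb: "vars b \<subseteq> {..<n}" using Conj.prems(1) by auto
  have "sat M le c x a" "sat M le c x b" using Conj.prems(5) by auto
  then have "sat M le c y a" "sat M le c y b"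
    using Conj.IH(1)[OF va Conj.prems(2,3,4)] Conj.IH(2)[OF vb Conj.prems(2,3,4)] by auto
  then show ?case by simp
next
  case (Disj a b)
  have va: "vars a \<subseteq> {..<n}" and vb: "vars b \<subseteq> {..<n}" using Disj.prems(1) by auto
  have "sat M le c x a \<or> sat M le c x b" using Disj.prems(5) by auto
  then have "sat M le c y a \<or> sat M le c y b"
    using Disj.IH(1)[OF va Disj.prems(2,3,4)] Disj.IH(2)[OF vb Disj.prems(2,3,4)] by auto
  then show ?case by simp
next
  case (Imp a b)
  show ?case unfolding sat.simps
  proof (intro ballI impI)
    fix w assume w: "w \<in> M" "le y w" "sat M le c w a"
    have "le x w" using t2[OF m] Imp.prems(2,3,4) w(1,2) by blast
    moreover have "\<forall>w\<in>M. le x w \<longrightarrow> sat M le c w a \<longrightarrow> sat M le c w b" using Imp.prems(5) by simp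
    ultimately show "sat M le c w b" using w by blast
  qed
qed

lemma key:
  assumes m: "is_model n M le c"
  shows "conj_imp \<phi> \<Longrightarrow> vars \<phi> \<subseteq> {..<n} \<Longrightarrow> x \<in> M \<Longrightarrow> \<not> sat M le c x \<phi> \<Longrightarrow>
     (\<forall>y\<in>M. le x y \<and> y \<noteq> x \<longrightarrow> sat M le c y \<phi>) \<Longrightarrow>
     \<exists>i<n. \<not> c x i \<and> (\<forall>y\<in>M. le x y \<and> y \<noteq> x \<longrightarrow> c y i)"
proof (induction \<phi>)
  case (Var i)
  have "i < n" using Var.prems(2) by simp
  moreover have "\<not> c x i" using Var.prems(4) by simp
  moreover have "\<forall>y\<in>M. le x y \<and> y \<noteq> x \<longrightarrow> c y i" using Var.prems(5) by simp
  ultimately show ?case by blast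
next
  case Bot
  then show ?case by simp
next
  case (Disj a b)
  then show ?case by simp
next
  case (Conj a b)
  have ca: "conj_imp a" "vars a \<subseteq> {..<n}" and cb: "conj_imp b" "vars b \<subseteq> {..<n}"
    using Conj.prems(1,2) by auto
  have ua: "\<forall>y\<in>M. le x y \<and> y \<noteq> x \<longrightarrow> sat M le c y a"
   and ub: "\<forall>y\<in>M. le x y \<and> y \<noteq> x \<longrightarrow> sat M le c y b"
    using Conj.prems(5) by simp_all
  show ?case
  proof (cases "sat M le c x a")
    case True
    then have "\<not> sat M le c x b" using Conj.prems(4) by simp
    then show ?thesis using Conj.IH(2)[OF cb Conj.prems(3) _ ub] by blast
  next
    case False
    then show ?thesis using Conj.IH(1)[OF ca Conj.prems(3) _ ua] by blast
  qed
next
  case (Imp a b)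
  have ca: "vars a \<subseteq> {..<n}" and cb: "conj_imp b" "vars b \<subseteq> {..<n}"
    using Imp.prems(1,2) by auto
  have refl: "\<forall>x\<in>M. le x x" using m unfolding is_model_def by blast
  have ex: "\<exists>z\<in>M. le x z \<and> sat M le c z a \<and> \<not> sat M le c z b" using Imp.prems(4) by simp
  then obtain z where z: "z \<in> M" "le x z" "sat M le c z a" "\<not> sat M le c z b" by blast
  have "z = x"
  proof (rule ccontr)
    assume "z \<noteq> x"
    then have "sat M le c z (Imp a b)" using Imp.prems(5) z(1,2) by blast
    then have "\<forall>w\<in>M. le z w \<longrightarrow> sat M le c w a \<longrightarrow> sat M le c w b" by simp
    moreover have "le z z" using refl z(1) by blast
    ultimately show False using z by blast
  qed
  have xa: "sat M le c x a" using z \<open>z = x\<close> by simp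
  have xb: "\<not> sat M le c x b" using z \<open>z = x\<close> by simp
  have ub: "\<forall>y\<in>M. le x y \<and> y \<noteq> x \<longrightarrow> sat M le c y b"
  proof (intro ballI impI)
    fix y assume y: "y \<in> M" "le x y \<and> y \<noteq> x"
    have ya: "sat M le c y a" using persist[OF m ca Imp.prems(3) y(1)] y(2) xa by blast
    have "sat M le c y (Imp a b)" using Imp.prems(5) y by blast
    then have "\<forall>w\<in>M. le y w \<longrightarrow> sat M le c w a \<longrightarrow> sat M le c w b" by simp
    moreover have "le y y" using refl y(1) by blast
    ultimately show "sat M le c y b" using y(1) ya by blast
  qed
  show ?case using Imp.IH(2)[OF cb Imp.prems(3) xb ub] .
qed

theorem lemma3p4:
  fixes n :: nat and M :: "'a set" and le :: "'a \<Rightarrow> 'a \<Rightarrow> bool" and c :: "'a \<Rightarrow> nat \<Rightarrow> bool"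
  assumes "n \<ge> 1" and "is_model n M le c" and "x \<in> M"
  shows "separated n M le c x \<longleftrightarrow>
         (\<exists>\<phi>. conj_imp \<phi> \<and> vars \<phi> \<subseteq> {..<n} \<and> form_border_point M le c \<phi> x)"
proof
  assume "separated n M le c x"
  then obtain i where "i < n" "form_border_point M le c (Var i) x" unfolding separated_def by auto
  then show "\<exists>\<phi>. conj_imp \<phi> \<and> vars \<phi> \<subseteq> {..<n} \<and> form_border_point M le c \<phi> x"
  proof (intro exI[of _ "Var i"] conjI)
    show "conj_imp (Var i)" by simp
    show "vars (Var i) \<subseteq> {..<n}" using \<open>i < n\<close> by simp
  qed (rule \<open>form_border_point M le c (Var i) x\<close>)
next
  assume "\<exists>\<phi>. conj_imp \<phi> \<and> vars \<phi> \<subseteq> {..<n} \<and> form_border_point M le c \<phi> x"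
  then obtain \<phi> where p: "conj_imp \<phi>" "vars \<phi> \<subseteq> {..<n}" "form_border_point M le c \<phi> x" by auto
  have ns: "\<not> sat M le c x \<phi>" and up: "\<forall>y\<in>M. le x y \<and> y \<noteq> x \<longrightarrow> sat M le c y \<phi>"
    using p(3) unfolding form_border_point_def border_point_def val_def by auto
  obtain i where "i < n" "\<not> c x i" "\<forall>y\<in>M. le x y \<and> y \<noteq> x \<longrightarrow> c y i"
    using key[OF assms(2) p(1) p(2) assms(3) ns up] by blast
  then show "separated n M le c x"
    unfolding separated_def form_border_point_def border_point_def val_def using assms(3) by auto
qed

end
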